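(* Let $D$ be a set (the input domain) and consider a multi-task model consisting of three conditional probability distributions $\mathcal{P}^1(y\mid \vec{x}),\mathcal{P}^2(y\mid \vec{x}),\mathcal{P}^3(y\mid \vec{x})$ on labels $y\in\{-1,+1\}$, for $\vec{x}\in D$, which encodes the bias $$\mathcal{P}^1(+1\mid \vec{x})+\mathcal{P}^2(+1\mid \vec{x})+\mathcal{P}^3(+1\mid \vec{x})=\tfrac{3}{2}\quad\text{for all }\vec{x}\in D.$$ Let $V=\{(\mathcal{P}^1(+1\mid\vec{x}),\mathcal{P}^2(+1\mid\vec{x}),\mathcal{P}^3(+1\mid\vec{x})) : \vec{x}\in D\}\subset[0,1]^3$. Let $\vec{v}_1=(1,0,\tfrac12)$, $\vec{v}_2=(0,1,\tfrac12)$, $\vec{v}_3=(\tfrac12,1,0)$, $\vec{v}_4=(\tfrac12,0,1)$, $\vec{v}_5=(0,\tfrac12,1)$, $\vec{v}_6=(1,\tfrac12,0)$, and for $0<\eta<1$ let $\vec{u}_i(\eta)=\eta\vec{v}_i+(1-\eta)(\tfrac12,\tfrac12,\tfrac12)$, $i=1,\dots,6$. Let $V_{2/3}$ be the convex hull of $\vec{u}_1(2/3),\dots,\vec{u}_6(2/3)$. If $V_{2/3}$ is strictly contained in the convex hull of $V$, in the sense that $V_{2/3}$ lies in the relative interior of $\mathrm{conv}(V)$ within the plane $\{z\in\mathbb{R}^3: z_1+z_2+z_3=\tfrac32\}$ (equivalently, $\mathrm{conv}(V)$ contains $\vec{u}_1(\eta),\dots,\vec{u}_6(\eta)$ for some $\eta>\tfrac23$),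 then the multi-task model is contextual, i.e. its operational scenario admits no noncontextual ontological model.
   Context: Operational scenario of the multi-task model: preparations $\mathbf{S}_{\vec{x}}$, one for each $\vec{x}\in D$; effects $\mathbf{E}^k_y$ ($k=1,2,3$, $y=\pm1$), a trivial effect $\Omega$ and a null effect $\emptyset$; operational statistics $P(\mathbf{E}^k_y\mid\mathbf{S}_{\vec{x}})=\mathcal{P}^k(y\mid\vec{x})$, $P(\Omega\mid\mathbf{S})=1$, $P(\emptyset\mid\mathbf{S})=0$. Preparation densities are finite convex combinations $s=\sum_j p_j\mathbf{S}_j$ of preparations, and effect densities are finite convex combinations $e=\sum_j q_j\mathbf{E}_j$ of effects; statistics are extended bilinearly, $P(e\mid s)=\sum_{j,l}q_l p_j P(\mathbf{E}_l\mid\mathbf{S}_j)$. Two preparation densities $s_1,s_2$ are operationally equivalent ($s_1\sim s_2$) iff $P(\mathbf{E}\mid s_1)=P(\mathbf{E}\mid s_2)$ for all effects $\mathbf{E}$; two effect densities $e_1,e_2$ are operationally equivalent iff $P(e_1\mid\mathbf{S})=P(e_2\mid\mathbf{S})$ for all preparations $\mathbf{S}$. An ontological model consists of a measure space $\Lambda$ of ontic states, a probability density $\mu_{\mathbf{S}}$ on $\Lambda$ for each preparation and a measurable response function $\xi_{\mathbf{E}}:\Lambda\to[0,1]$ for each effect, with $\xi_\Omega\equiv1$, $\xi_\emptyset\equiv0$, extended linearly to densities ($\mu_{\sum p_j\mathbf{S}_j}=\sum p_j\mu_{\mathbf{S}_j}$, $\xi_{\sum q_j\mathbf{E}_j}=\sum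 q_j\xi_{\mathbf{E}_j}$), such that $P(\mathbf{E}\mid\mathbf{S})=\int_\Lambda\mu_{\mathbf{S}}(\lambda)\xi_{\mathbf{E}}(\lambda)\,d\lambda$ for all preparations and effects. It is noncontextual if operationally equivalent preparation densities have identical distributions $\mu$ (for all $\lambda$) and operationally equivalent effect densities have identical response functions $\xi$. The multi-task model is noncontextual iff such a noncontextual ontological model exists, and contextual otherwise. *)

theory Defs
  imports "HOL-Analysis.Analysis"
begin

datatype task = T1 | T2 | T3
datatype label = Pos | Neg

datatype effect = E task label | Omega | NullEff

lemma UNIV_task: "(UNIV :: task set) = {T1, T2, T3}"
  using task.exhaust by blast

lemma UNIV_label: "(UNIV :: label set) = {Pos, Neg}"
  using label.exhaust by blast

lemma UNIV_effect:
  "(UNIV :: effect set) = {Omega, NullEff} \<union> (\<lambda>(k, y). E k y) ` (UNIV \<times> UNIV)"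
  by (auto intro: effect.exhaust) (metis effect.exhaust image_iff iso_tuple_UNIV_I case_prod_conv)

instance effect :: finite
proof
  show "finite (UNIV :: effect set)"
    unfolding UNIV_effect UNIV_task UNIV_label by simp
qed

definition multitask_model :: "(task \<Rightarrow> label \<Rightarrow> 'd \<Rightarrow> real) \<Rightarrow> bool" where
  "multitask_model P \<longleftrightarrow> (\<forall>k x. P k Pos x \<ge> 0 \<and> P k Neg x \<ge> 0 \<and> P k Pos x + P k Neg x = 1)"

fun opstat :: "(task \<Rightarrow> label \<Rightarrow> 'd \<Rightarrow> real) \<Rightarrow> effect \<Rightarrow> 'd \<Rightarrow> real" where
  "opstat P (E k y) x = P k y x"
| "opstat P Omega x = 1"
| "opstat P NullEff x = 0"

text \<open>Preparation densities: finitely supported probability weights on the preparations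
  S_x (x \<in> D).  Effect densities: probability weights on the (finitely many) effects.\<close>

definition prep_density :: "('d \<Rightarrow> real) \<Rightarrow> bool" where
  "prep_density p \<longleftrightarrow> finite {x. p x \<noteq> 0} \<and> (\<forall>x. p x \<ge> 0) \<and> sum p {x. p x \<noteq> 0} = 1"

definition eff_density :: "(effect \<Rightarrow> real) \<Rightarrow> bool" where
  "eff_density q \<longleftrightarrow> (\<forall>e. q e \<ge> 0) \<and> sum q UNIV = 1"

definition stat_dens :: "(task \<Rightarrow> label \<Rightarrow> 'd \<Rightarrow> real) \<Rightarrow> (effect \<Rightarrow> real) \<Rightarrow> ('d \<Rightarrow> real) \<Rightarrow> real" where
  "stat_dens P q p = (\<Sum>e\<in>UNIV. \<Sum>x\<in>{x. p x \<noteq> 0}. q e * p x * opstat P e x)"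

definition prep_equiv :: "(task \<Rightarrow> label \<Rightarrow> 'd \<Rightarrow> real) \<Rightarrow> ('d \<Rightarrow> real) \<Rightarrow> ('d \<Rightarrow> real) \<Rightarrow> bool" where
  "prep_equiv P p1 p2 \<longleftrightarrow>
     (\<forall>e. stat_dens P (\<lambda>e'. if e' = e then 1 else 0) p1 = stat_dens P (\<lambda>e'. if e' = e then 1 else 0) p2)"

definition eff_equiv :: "(task \<Rightarrow> label \<Rightarrow> 'd \<Rightarrow> real) \<Rightarrow> (effect \<Rightarrow> real) \<Rightarrow> (effect \<Rightarrow> real) \<Rightarrow> bool" where
  "eff_equiv P q1 q2 \<longleftrightarrow>
     (\<forall>x. stat_dens P q1 (\<lambda>x'. if x' = x then 1 else 0) = stat_dens P q2 (\<lambda>x'. if x' = x then 1 else 0))"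

definition mu_dens :: "('d \<Rightarrow> 'l \<Rightarrow> real) \<Rightarrow> ('d \<Rightarrow> real) \<Rightarrow> 'l \<Rightarrow> real" where
  "mu_dens \<mu> p l = (\<Sum>x\<in>{x. p x \<noteq> 0}. p x * \<mu> x l)"

definition xi_dens :: "(effect \<Rightarrow> 'l \<Rightarrow> real) \<Rightarrow> (effect \<Rightarrow> real) \<Rightarrow> 'l \<Rightarrow> real" where
  "xi_dens \<xi> q l = (\<Sum>e\<in>UNIV. q e * \<xi> e l)"

definition ontological_model ::
  "(task \<Rightarrow> label \<Rightarrow> 'd \<Rightarrow> real) \<Rightarrow> 'l measure \<Rightarrow> ('d \<Rightarrow> 'l \<Rightarrow> real) \<Rightarrow> (effect \<Rightarrow> 'l \<Rightarrow> real) \<Rightarrow> bool" where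
  "ontological_model P M \<mu> \<xi> \<longleftrightarrow>
     (\<forall>x. \<mu> x \<in> borel_measurable M \<and> (\<forall>l\<in>space M. \<mu> x l \<ge> 0) \<and>
          integrable M (\<mu> x) \<and> (\<integral>l. \<mu> x l \<partial>M) = 1) \<and>
     (\<forall>e. \<xi> e \<in> borel_measurable M \<and> (\<forall>l\<in>space M. 0 \<le> \<xi> e l \<and> \<xi> e l \<le> 1)) \<and>
     (\<forall>l\<in>space M. \<xi> Omega l = 1 \<and> \<xi> NullEff l = 0) \<and>
     (\<forall>e x. opstat P e x = (\<integral>l. \<mu> x l * \<xi> e l \<partial>M))"

definition noncontextual_model ::
  "(task \<Rightarrow> label \<Rightarrow> 'd \<Rightarrow> real) \<Rightarrow> 'l measure \<Rightarrow> ('d \<Rightarrow> 'l \<Rightarrow> real) \<Rightarrow> (effect \<Rightarrow> 'l \<Rightarrow> real) \<Rightarrow> bool" where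
  "noncontextual_model P M \<mu> \<xi> \<longleftrightarrow>
     ontological_model P M \<mu> \<xi> \<and>
     (\<forall>p1 p2. prep_density p1 \<and> prep_density p2 \<and> prep_equiv P p1 p2 \<longrightarrow>
        (\<forall>l\<in>space M. mu_dens \<mu> p1 l = mu_dens \<mu> p2 l)) \<and>
     (\<forall>q1 q2. eff_density q1 \<and> eff_density q2 \<and> eff_equiv P q1 q2 \<longrightarrow>
        (\<forall>l\<in>space M. xi_dens \<xi> q1 l = xi_dens \<xi> q2 l))"

text \<open>Since the
  ontic state space is an arbitrary measure space, the type 'l of ontic states is
  universally quantified at the theorem level.\<close>

definition contextual :: "(task \<Rightarrow> label \<Rightarrow> 'd \<Rightarrow> real) \<Rightarrow> 'l itself \<Rightarrow> bool" where
  "contextual P _ \<longleftrightarrow> \<not> (\<exists>(M :: 'l measure) \<mu> \<xi>. noncontextual_model P M \<mu> \<xi>)"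

definition Vset :: "(task \<Rightarrow> label \<Rightarrow> 'd \<Rightarrow> real) \<Rightarrow> (real \<times> real \<times> real) set" where
  "Vset P = (\<lambda>x. (P T1 Pos x, P T2 Pos x, P T3 Pos x)) ` UNIV"

definition vv :: "nat \<Rightarrow> real \<times> real \<times> real" where
  "vv i = (if i = 1 then (1, 0, 1/2) else if i = 2 then (0, 1, 1/2) else
           if i = 3 then (1/2, 1, 0) else if i = 4 then (1/2, 0, 1) else
           if i = 5 then (0, 1/2, 1) else (1, 1/2, 0))"

definition uu :: "real \<Rightarrow> nat \<Rightarrow> real \<times> real \<times> real" where
  "uu \<eta> i = \<eta> *\<^sub>R vv i + (1 - \<eta>) *\<^sub>R (1/2, 1/2, 1/2)"

definition V23 :: "(real \<times> real \<times> real) set" where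
  "V23 = convex hull (uu (2/3) ` {1..6})"

end

theory Submission
  imports Defs
begin
lemma bgen: "p1 \<le> a1/2 \<Longrightarrow> p2 \<le> a2/2 \<Longrightarrow> p3 \<le> a3/2 \<Longrightarrow> a1+a2+a3 \<le> 4*(m::real) \<Longrightarrow> (p1+p2+p3)/2 \<le> m" by argo
lemma pw:
  fixes m1 m2 m3 m4 m5 m6 x1 x2 x3 :: real
  assumes "m1 \<ge> 0" "m2 \<ge> 0" "m3 \<ge> 0" "m4 \<ge> 0" "m5 \<ge> 0" "m6 \<ge> 0"
    "0 \<le> x1" "x1 \<le> 1" "0 \<le> x2" "x2 \<le> 1" "0 \<le> x3" "x3 \<le> 1"
    "m1 + m2 = m3 + m4" "m1 + m2 = m5 + m6" "3 * (m1 + m2) = 2 * (m1 + m3 + m5)"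
  shows "((m1 - m2) * (x1 - x2) + (m3 - m4) * (x2 - x3) + (m5 - m6) * (x3 - x1)) / 2 \<le> m1 + m2"
proof -
  define A where "A = m1 - m2"
  define B where "B = m3 - m4"
  define C where "C = m5 - m6"
  have s: "A + B + C = 0" using assms unfolding A_def B_def C_def by (simp add: algebra_simps; linarith)
  have eq: "(m1 - m2) * (x1 - x2) + (m3 - m4) * (x2 - x3) + (m5 - m6) * (x3 - x1)
      = (A - C) * (x1 - 1/2) + (B - A) * (x2 - 1/2) + (C - B) * (x3 - 1/2)"
    unfolding A_def B_def C_def by (simp add: algebra_simps divide_simps)
  have b: "y * (x - 1/2) \<le> \<bar>y\<bar> / 2" if "0 \<le> x" "x \<le> 1" for x y :: real
  proof -
    have "y * (x - 1/2) \<le> \<bar>y * (x - 1/2)\<bar>" by simp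
    also have "\<dots> = \<bar>y\<bar> * \<bar>x - 1/2\<bar>" by (simp add: abs_mult)
    also have "\<dots> \<le> \<bar>y\<bar> * (1/2)" proof (intro mult_left_mono) show "\<bar>x - 1/2\<bar> \<le> 1/2" using that by arith qed simp
    finally show ?thesis by simp
  qed
  have hA: "\<bar>A\<bar> \<le> m1 + m2" unfolding A_def using assms by arith
  have hB: "\<bar>B\<bar> \<le> m1 + m2" unfolding B_def using assms by arith
  have hC: "\<bar>C\<bar> \<le> m1 + m2" unfolding C_def using assms by arith
  have h: "\<bar>A - C\<bar> + \<bar>B - A\<bar> + \<bar>C - B\<bar> \<le> 4 * (m1 + m2)"
    using hA hB hC s by argo
  have h1: "(A - C) * (x1 - 1/2) \<le> \<bar>A - C\<bar> / 2" by (rule b[OF assms(7,8)])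
  have h2: "(B - A) * (x2 - 1/2) \<le> \<bar>B - A\<bar> / 2" by (rule b[OF assms(9,10)])
  have h3: "(C - B) * (x3 - 1/2) \<le> \<bar>C - B\<bar> / 2" by (rule b[OF assms(11,12)])
  show ?thesis unfolding eq
    by (rule bgen[OF h1 h2 h3 h])
qed

definition avg :: "('d \<Rightarrow> real) \<Rightarrow> ('d \<Rightarrow> real) \<Rightarrow> real" where
  "avg p f = (\<Sum>x\<in>{x. p x \<noteq> 0}. p x * f x)"

lemma avg_superset:
  assumes "finite F" "{x. p x \<noteq> 0} \<subseteq> F"
  shows "avg p f = (\<Sum>x\<in>F. p x * f x)"
  unfolding avg_def by (rule sum.mono_neutral_left) (use assms in auto)

definition mix :: "real \<Rightarrow> ('d \<Rightarrow> real) \<Rightarrow> ('d \<Rightarrow> real) \<Rightarrow> 'd \<Rightarrow> real" where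
  "mix a p q = (\<lambda>x. a * p x + (1 - a) * q x)"

lemma mix_avg:
  assumes "prep_density p" "prep_density q"
  shows "avg (mix a p q) f = a * avg p f + (1 - a) * avg q f"
proof -
  let ?F = "{x. p x \<noteq> 0} \<union> {x. q x \<noteq> 0}"
  have fin: "finite ?F" using assms unfolding prep_density_def by auto
  have sub: "{x. mix a p q x \<noteq> 0} \<subseteq> ?F" unfolding mix_def by auto
  have "avg (mix a p q) f = (\<Sum>x\<in>?F. mix a p q x * f x)" by (rule avg_superset[OF fin sub])
  also have "\<dots> = a * (\<Sum>x\<in>?F. p x * f x) + (1 - a) * (\<Sum>x\<in>?F. q x * f x)"
  proof -
    have "\<And>x. mix a p q x * f x = a * (p x * f x) + (1 - a) * (q x * f x)"
      unfolding mix_def by (simp add: algebra_simps)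
    then show ?thesis by (simp add: sum.distrib sum_distrib_left)
  qed
  also have "\<dots> = a * avg p f + (1 - a) * avg q f"
    using avg_superset[OF fin, of p f] avg_superset[OF fin, of q f] by auto
  finally show ?thesis .
qed

lemma avg_one: "prep_density p \<Longrightarrow> avg p (\<lambda>_. 1) = 1"
  unfolding avg_def prep_density_def by simp

lemma mix_density:
  assumes "prep_density p" "prep_density q" "0 \<le> a" "a \<le> 1"
  shows "prep_density (mix a p q)"
proof -
  let ?F = "{x. p x \<noteq> 0} \<union> {x. q x \<noteq> 0}"
  have fin: "finite ?F" using assms unfolding prep_density_def by auto
  have sub: "{x. mix a p q x \<noteq> 0} \<subseteq> ?F" unfolding mix_def by auto
  have nn: "\<forall>x. mix a p q x \<ge> 0" using assms unfolding prep_density_def mix_def by auto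
  have "sum (mix a p q) {x. mix a p q x \<noteq> 0} = avg (mix a p q) (\<lambda>_. 1)" unfolding avg_def by simp
  also have "\<dots> = 1" using mix_avg[OF assms(1,2)] avg_one[OF assms(1)] avg_one[OF assms(2)] by simp
  finally show ?thesis unfolding prep_density_def using nn finite_subset[OF sub fin] by blast
qed

definition pt :: "'d \<Rightarrow> 'd \<Rightarrow> real" where "pt x = (\<lambda>x'. if x' = x then 1 else 0)"

lemma pt_supp: "{x'. pt x x' \<noteq> 0} = {x}" unfolding pt_def by auto

lemma pt_density: "prep_density (pt x)"
  unfolding prep_density_def pt_supp by (simp add: pt_def)

lemma pt_avg: "avg (pt x) f = f x"
  unfolding avg_def pt_supp by (simp add: pt_def)

definition Aset :: "(task \<Rightarrow> label \<Rightarrow> 'd \<Rightarrow> real) \<Rightarrow> (real \<times> real \<times> real) set" where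
  "Aset P = {(avg p (P T1 Pos), avg p (P T2 Pos), avg p (P T3 Pos)) | p. prep_density p}"

lemma hull_sub: "convex hull (Vset P) \<subseteq> Aset P"
proof (rule hull_minimal)
  show "Vset P \<subseteq> Aset P"
  proof
    fix v assume "v \<in> Vset P"
    then obtain x where "v = (P T1 Pos x, P T2 Pos x, P T3 Pos x)" unfolding Vset_def by auto
    then show "v \<in> Aset P" unfolding Aset_def using pt_density[of x] pt_avg[of x]
      by (intro CollectI exI[of _ "pt x"]) auto
  qed
  show "convex (Aset P)"
  proof (rule convexI)
    fix y z :: "real \<times> real \<times> real" and u v :: real
    assume "y \<in> Aset P" "z \<in> Aset P" "0 \<le> u" "0 \<le> v" "u + v = 1"
    then obtain p q where p: "prep_density p" "y = (avg p (P T1 Pos), avg p (P T2 Pos), avg p (P T3 Pos))"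
      and q: "prep_density q" "z = (avg q (P T1 Pos), avg q (P T2 Pos), avg q (P T3 Pos))"
      unfolding Aset_def by auto
    have v: "v = 1 - u" using \<open>u + v = 1\<close> by simp
    have "prep_density (mix u p q)" using mix_density[OF p(1) q(1)] \<open>0 \<le> u\<close> \<open>0 \<le> v\<close> v by simp
    moreover have "u *\<^sub>R y + v *\<^sub>R z = (avg (mix u p q) (P T1 Pos), avg (mix u p q) (P T2 Pos), avg (mix u p q) (P T3 Pos))"
      unfolding mix_avg[OF p(1) q(1)] p(2) q(2) v by simp
    ultimately show "u *\<^sub>R y + v *\<^sub>R z \<in> Aset P" unfolding Aset_def by blast
  qed
qed

lemma stat_dens_point: "stat_dens P (\<lambda>e'. if e' = e then 1 else 0) p = avg p (opstat P e)"
proof -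
  have "\<And>e'. (\<Sum>x\<in>{x. p x \<noteq> 0}. (if e' = e then 1 else 0) * p x * opstat P e' x)
      = (if e' = e then (\<Sum>x\<in>{x. p x \<noteq> 0}. p x * opstat P e x) else 0)" by auto
  then show ?thesis unfolding stat_dens_def avg_def by simp
qed

lemma opstat_fun: "opstat P (E k y) = P k y" "opstat P Omega = (\<lambda>_. 1)" "opstat P NullEff = (\<lambda>_. 0)"
  by (auto intro!: ext)

lemma avg_diff: "avg p (\<lambda>x. f x - g x) = avg p f - avg p g"
  unfolding avg_def by (simp add: right_diff_distrib sum_subtractf)

lemma equiv_of_avg:
  assumes mm: "multitask_model P" and d: "prep_density p1" "prep_density p2"
    and eq: "\<forall>k. avg p1 (P k Pos) = avg p2 (P k Pos)"
  shows "prep_equiv P p1 p2"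
  unfolding prep_equiv_def stat_dens_point
proof
  fix e
  have neg: "avg p (P k Neg) = 1 - avg p (P k Pos)" if "prep_density p" for p k
  proof -
    have "P k Neg = (\<lambda>x. 1 - P k Pos x)" using mm unfolding multitask_model_def
      by (auto simp: algebra_simps intro!: ext)
    then show ?thesis using avg_diff[of p "\<lambda>_. 1" "P k Pos"] avg_one[OF that] by simp
  qed
  show "avg p1 (opstat P e) = avg p2 (opstat P e)"
  proof (cases e)
    case (E k y)
    then show ?thesis using eq neg[OF d(1)] neg[OF d(2)] by (cases y) (auto simp: opstat_fun)
  next
    case Omega
    then show ?thesis using avg_one[OF d(1)] avg_one[OF d(2)] by (simp add: opstat_fun)
  next
    case NullEff
    then show ?thesis by (simp add: avg_def opstat_fun)
  qed
qed

lemma mu_dens_avg: "mu_dens \<mu> p l = avg p (\<lambda>x. \<mu> x l)"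
  unfolding mu_dens_def avg_def by simp

context
  fixes P :: "task \<Rightarrow> label \<Rightarrow> 'd \<Rightarrow> real" and M :: "'l measure" and \<mu> \<xi>
  assumes om: "ontological_model P M \<mu> \<xi>"
begin

lemma om_int: "integrable M (\<lambda>l. \<mu> x l * \<xi> e l)"
proof (rule Bochner_Integration.integrable_bound[where f="\<mu> x"])
  show "integrable M (\<mu> x)" using om unfolding ontological_model_def by blast
  have "\<mu> x \<in> borel_measurable M" "\<xi> e \<in> borel_measurable M" using om unfolding ontological_model_def by blast+
  then show "(\<lambda>l. \<mu> x l * \<xi> e l) \<in> borel_measurable M" by measurable
  show "AE l in M. norm (\<mu> x l * \<xi> e l) \<le> norm (\<mu> x l)"
  proof (rule AE_I2)
    fix l assume l: "l \<in> space M"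
    have "\<mu> x l \<ge> 0" "0 \<le> \<xi> e l" "\<xi> e l \<le> 1" using om l unfolding ontological_model_def by blast+
    then show "norm (\<mu> x l * \<xi> e l) \<le> norm (\<mu> x l)"
      by (simp add: abs_mult mult_left_le)
  qed
qed

lemma om_mu_int: "integrable M (\<mu> x)" "(\<integral>l. \<mu> x l \<partial>M) = 1"
  using om unfolding ontological_model_def by blast+

lemma md_int: "integrable M (mu_dens \<mu> p)"
  unfolding mu_dens_def using om_mu_int by auto

lemma md_integral: assumes "prep_density p" shows "(\<integral>l. mu_dens \<mu> p l \<partial>M) = 1"
proof -
  have "(\<integral>l. mu_dens \<mu> p l \<partial>M) = (\<Sum>x\<in>{x. p x \<noteq> 0}. p x * (\<integral>l. \<mu> x l \<partial>M))"
    unfolding mu_dens_def using om_mu_int by (subst Bochner_Integration.integral_sum) auto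
  also have "\<dots> = 1" using assms om_mu_int unfolding prep_density_def by simp
  finally show ?thesis .
qed

lemma mdx_int: "integrable M (\<lambda>l. mu_dens \<mu> p l * \<xi> e l)"
proof -
  have "(\<lambda>l. mu_dens \<mu> p l * \<xi> e l) = (\<lambda>l. \<Sum>x\<in>{x. p x \<noteq> 0}. p x * (\<mu> x l * \<xi> e l))"
    unfolding mu_dens_def by (simp add: sum_distrib_right mult.assoc)
  then show ?thesis using om_int by auto
qed

lemma mdx_integral: "(\<integral>l. mu_dens \<mu> p l * \<xi> e l \<partial>M) = avg p (opstat P e)"
proof -
  have "(\<lambda>l. mu_dens \<mu> p l * \<xi> e l) = (\<lambda>l. \<Sum>x\<in>{x. p x \<noteq> 0}. p x * (\<mu> x l * \<xi> e l))"
    unfolding mu_dens_def by (simp add: sum_distrib_right mult.assoc)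
  then have "(\<integral>l. mu_dens \<mu> p l * \<xi> e l \<partial>M) = (\<Sum>x\<in>{x. p x \<noteq> 0}. p x * (\<integral>l. \<mu> x l * \<xi> e l \<partial>M))"
    using om_int by (simp add: Bochner_Integration.integral_sum)
  also have "\<dots> = avg p (opstat P e)"
    using om unfolding ontological_model_def avg_def by simp
  finally show ?thesis .
qed

lemma md_nonneg: "prep_density p \<Longrightarrow> l \<in> space M \<Longrightarrow> mu_dens \<mu> p l \<ge> 0"
  unfolding mu_dens_def prep_density_def using om unfolding ontological_model_def
  by (auto intro!: sum_nonneg)

lemma xi_bounds: "l \<in> space M \<Longrightarrow> 0 \<le> \<xi> e l \<and> \<xi> e l \<le> 1"
  using om unfolding ontological_model_def by blast

end


lemma mix_md: "prep_density p \<Longrightarrow> prep_density q \<Longrightarrow>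
    mu_dens \<mu> (mix a p q) l = a * mu_dens \<mu> p l + (1 - a) * mu_dens \<mu> q l"
  unfolding mu_dens_avg by (rule mix_avg)

theorem theorem1:
  fixes P :: "task \<Rightarrow> label \<Rightarrow> 'd \<Rightarrow> real"
  assumes "multitask_model P"
    and "\<forall>x. P T1 Pos x + P T2 Pos x + P T3 Pos x = 3/2"
    and "V23 \<subseteq> rel_interior (convex hull (Vset P))"
  shows "contextual P TYPE('l)"
  unfolding contextual_def
proof
  assume "\<exists>(M :: 'l measure) \<mu> \<xi>. noncontextual_model P M \<mu> \<xi>"
  then obtain M :: "'l measure" and \<mu> \<xi> where nc: "noncontextual_model P M \<mu> \<xi>" by blast
  have om: "ontological_model P M \<mu> \<xi>" using nc unfolding noncontextual_model_def by blast
  have pnc: "\<And>p1 p2 l. prep_density p1 \<Longrightarrow> prep_density p2 \<Longrightarrow> prep_equiv P p1 p2 \<Longrightarrow>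
      l \<in> space M \<Longrightarrow> mu_dens \<mu> p1 l = mu_dens \<mu> p2 l"
    using nc unfolding noncontextual_model_def by blast
  define c :: "real \<times> real \<times> real" where "c = (1/2, 1/2, 1/2)"
  define K where "K = convex hull (Vset P)"
  have cvx: "convex K" unfolding K_def by simp
  have uV: "uu (2/3) i \<in> V23" if "i \<in> {1..6}" for i
    unfolding V23_def using that by (intro hull_inc) auto
  have "(1/2) *\<^sub>R uu (2/3) 1 + (1/2) *\<^sub>R uu (2/3) 2 \<in> V23"
    unfolding V23_def by (rule convexD[OF convex_convex_hull]) (auto intro: hull_inc)
  moreover have "(1/2) *\<^sub>R uu (2/3) 1 + (1/2) *\<^sub>R uu (2/3) 2 = c"
    by (simp add: uu_def vv_def c_def)
  ultimately have cV: "c \<in> V23" by simp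
  have relK: "uu (2/3) i \<in> rel_interior K" if "i \<in> {1..6}" for i
    using assms(3) uV[OF that] unfolding K_def by blast
  have cK: "c \<in> K" using assms(3) cV rel_interior_subset unfolding K_def by blast
  have Kne: "K \<noteq> {}" using cK by auto
  have "\<exists>e>1. (1 - e) *\<^sub>R c + e *\<^sub>R uu (2/3) i \<in> K" if "i \<in> {1..6}" for i
    using convex_rel_interior_iff[OF cvx Kne] relK[OF that] cK by blast
  then obtain ee where ee: "\<And>i. i \<in> {1..6} \<Longrightarrow> ee i > 1 \<and> (1 - ee i) *\<^sub>R c + ee i *\<^sub>R uu (2/3) i \<in> K"
    by metis
  define e0 where "e0 = Min (ee ` {1..6})"
  have e0gt: "e0 > 1" unfolding e0_def using ee by (subst Min_gr_iff) auto
  have e0le: "e0 \<le> ee i" if "i \<in> {1..6}" for i using that unfolding e0_def by (intro Min_le) auto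
  have yK: "(1 - e0) *\<^sub>R c + e0 *\<^sub>R uu (2/3) i \<in> K" if i: "i \<in> {1..6}" for i
  proof -
    define E where "E = ee i"
    have E: "E > 1" "e0 \<le> E" "(1 - E) *\<^sub>R c + E *\<^sub>R uu (2/3) i \<in> K"
      using ee[OF i] e0le[OF i] unfolding E_def by auto
    have "(1 - e0 / E) *\<^sub>R c + (e0 / E) *\<^sub>R ((1 - E) *\<^sub>R c + E *\<^sub>R uu (2/3) i) \<in> K"
      by (rule convexD[OF cvx cK E(3)]) (use E e0gt in auto)
    moreover have "(1 - e0 / E) *\<^sub>R c + (e0 / E) *\<^sub>R ((1 - E) *\<^sub>R c + E *\<^sub>R uu (2/3) i)
        = (1 - e0) *\<^sub>R c + e0 *\<^sub>R uu (2/3) i"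
      using E by (simp add: scaleR_add_right algebra_simps)
    ultimately show ?thesis by simp
  qed
  have "\<exists>\<rho>. prep_density \<rho> \<and> (1 - e0) *\<^sub>R c + e0 *\<^sub>R uu (2/3) i =
      (avg \<rho> (P T1 Pos), avg \<rho> (P T2 Pos), avg \<rho> (P T3 Pos))" if "i \<in> {1..6}" for i
    using hull_sub[of P] yK[OF that] unfolding K_def Aset_def by blast
  then obtain rho where rho: "\<And>i. i \<in> {1..6} \<Longrightarrow> prep_density (rho i) \<and> (1 - e0) *\<^sub>R c + e0 *\<^sub>R uu (2/3) i =
      (avg (rho i) (P T1 Pos), avg (rho i) (P T2 Pos), avg (rho i) (P T3 Pos))"
    by metis
  have r1c: "(prep_density (rho 1)) \<and> (avg (rho 1) (P T1 Pos) = 1/2 + e0/3) \<and> (avg (rho 1) (P T2 Pos) = 1/2 - e0/3) \<and> (avg (rho 1) (P T3 Pos) = 1/2)"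
    using rho[of 1] by (auto simp: c_def uu_def vv_def; argo)
  note r1 = r1c[THEN conjunct1] r1c[THEN conjunct2, THEN conjunct1] r1c[THEN conjunct2, THEN conjunct2, THEN conjunct1] r1c[THEN conjunct2, THEN conjunct2, THEN conjunct2]
  have r2c: "(prep_density (rho 2)) \<and> (avg (rho 2) (P T1 Pos) = 1/2 - e0/3) \<and> (avg (rho 2) (P T2 Pos) = 1/2 + e0/3) \<and> (avg (rho 2) (P T3 Pos) = 1/2)"
    using rho[of 2] by (auto simp: c_def uu_def vv_def; argo)
  note r2 = r2c[THEN conjunct1] r2c[THEN conjunct2, THEN conjunct1] r2c[THEN conjunct2, THEN conjunct2, THEN conjunct1] r2c[THEN conjunct2, THEN conjunct2, THEN conjunct2]
  have r3c: "(prep_density (rho 3)) \<and> (avg (rho 3) (P T1 Pos) = 1/2) \<and> (avg (rho 3) (P T2 Pos) = 1/2 + e0/3) \<and> (avg (rho 3) (P T3 Pos) = 1/2 - e0/3)"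
    using rho[of 3] by (auto simp: c_def uu_def vv_def; argo)
  note r3 = r3c[THEN conjunct1] r3c[THEN conjunct2, THEN conjunct1] r3c[THEN conjunct2, THEN conjunct2, THEN conjunct1] r3c[THEN conjunct2, THEN conjunct2, THEN conjunct2]
  have r4c: "(prep_density (rho 4)) \<and> (avg (rho 4) (P T1 Pos) = 1/2) \<and> (avg (rho 4) (P T2 Pos) = 1/2 - e0/3) \<and> (avg (rho 4) (P T3 Pos) = 1/2 + e0/3)"
    using rho[of 4] by (auto simp: c_def uu_def vv_def; argo)
  note r4 = r4c[THEN conjunct1] r4c[THEN conjunct2, THEN conjunct1] r4c[THEN conjunct2, THEN conjunct2, THEN conjunct1] r4c[THEN conjunct2, THEN conjunct2, THEN conjunct2]
  have r5c: "(prep_density (rho 5)) \<and> (avg (rho 5) (P T1 Pos) = 1/2 - e0/3) \<and> (avg (rho 5) (P T2 Pos) = 1/2) \<and> (avg (rho 5) (P T3 Pos) = 1/2 + e0/3)"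
    using rho[of 5] by (auto simp: c_def uu_def vv_def; argo)
  note r5 = r5c[THEN conjunct1] r5c[THEN conjunct2, THEN conjunct1] r5c[THEN conjunct2, THEN conjunct2, THEN conjunct1] r5c[THEN conjunct2, THEN conjunct2, THEN conjunct2]
  have r6c: "(prep_density (rho 6)) \<and> (avg (rho 6) (P T1 Pos) = 1/2 + e0/3) \<and> (avg (rho 6) (P T2 Pos) = 1/2) \<and> (avg (rho 6) (P T3 Pos) = 1/2 - e0/3)"
    using rho[of 6] by (auto simp: c_def uu_def vv_def; argo)
  note r6 = r6c[THEN conjunct1] r6c[THEN conjunct2, THEN conjunct1] r6c[THEN conjunct2, THEN conjunct2, THEN conjunct1] r6c[THEN conjunct2, THEN conjunct2, THEN conjunct2]
  note r1' = r1[unfolded One_nat_def]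
  define D12 where "D12 = mix (1/2) (rho 1) (rho 2)"
  define D34 where "D34 = mix (1/2) (rho 3) (rho 4)"
  define D56 where "D56 = mix (1/2) (rho 5) (rho 6)"
  define D13 where "D13 = mix (1/2) (rho 1) (rho 3)"
  define D135 where "D135 = mix (2/3) D13 (rho 5)"
  have dD12: "prep_density D12" unfolding D12_def by (rule mix_density[OF r1(1) r2(1)]) auto
  have dD34: "prep_density D34" unfolding D34_def by (rule mix_density[OF r3(1) r4(1)]) auto
  have dD56: "prep_density D56" unfolding D56_def by (rule mix_density[OF r5(1) r6(1)]) auto
  have dD13: "prep_density D13" unfolding D13_def by (rule mix_density[OF r1(1) r3(1)]) auto
  have dD135: "prep_density D135" unfolding D135_def by (rule mix_density[OF dD13 r5(1)]) auto
  have aD12: "\<forall>k. avg D12 (P k Pos) = 1/2"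
    unfolding D12_def mix_avg[OF r1(1) r2(1)] by (intro allI, induct_tac k) (simp_all add: r1 r1' r2 field_simps)
  have aD34: "\<forall>k. avg D34 (P k Pos) = 1/2"
    unfolding D34_def mix_avg[OF r3(1) r4(1)] by (intro allI, induct_tac k) (simp_all add: r3 r4 field_simps)
  have aD56: "\<forall>k. avg D56 (P k Pos) = 1/2"
    unfolding D56_def mix_avg[OF r5(1) r6(1)] by (intro allI, induct_tac k) (simp_all add: r5 r6 field_simps)
  have aD135: "\<forall>k. avg D135 (P k Pos) = 1/2"
    unfolding D135_def mix_avg[OF dD13 r5(1)] unfolding D13_def mix_avg[OF r1(1) r3(1)]
    by (intro allI, induct_tac k) (simp_all add: r1 r1' r3 r5 field_simps)
  have eq1: "prep_equiv P D12 D34" by (rule equiv_of_avg[OF assms(1) dD12 dD34]) (simp add: aD12 aD34)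
  have eq2: "prep_equiv P D12 D56" by (rule equiv_of_avg[OF assms(1) dD12 dD56]) (simp add: aD12 aD56)
  have eq3: "prep_equiv P D12 D135" by (rule equiv_of_avg[OF assms(1) dD12 dD135]) (simp add: aD12 aD135)
  define m where "m i l = mu_dens \<mu> (rho i) l" for i l
  define X where "X k l = \<xi> (E k Pos) l" for k l
  define Z where "Z l = ((m 1 l - m 2 l) * (X T1 l - X T2 l) + (m 3 l - m 4 l) * (X T2 l - X T3 l)
      + (m 5 l - m 6 l) * (X T3 l - X T1 l)) / 2" for l
  have pwZ: "Z l \<le> m 1 l + m 2 l" if l: "l \<in> space M" for l
  proof -
    have e1: "mu_dens \<mu> D12 l = mu_dens \<mu> D34 l" by (rule pnc[OF dD12 dD34 eq1 l])
    have e2: "mu_dens \<mu> D12 l = mu_dens \<mu> D56 l" by (rule pnc[OF dD12 dD56 eq2 l])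
    have e3: "mu_dens \<mu> D12 l = mu_dens \<mu> D135 l" by (rule pnc[OF dD12 dD135 eq3 l])
    have f1: "m 1 l + m 2 l = m 3 l + m 4 l" using e1 unfolding D12_def D34_def m_def
      mix_md[OF r1(1) r2(1)] mix_md[OF r3(1) r4(1)] by argo
    have f2: "m 1 l + m 2 l = m 5 l + m 6 l" using e2 unfolding D12_def D56_def m_def
      mix_md[OF r1(1) r2(1)] mix_md[OF r5(1) r6(1)] by argo
    have f3: "3 * (m 1 l + m 2 l) = 2 * (m 1 l + m 3 l + m 5 l)" using e3 unfolding D12_def D135_def m_def
      mix_md[OF r1(1) r2(1)] mix_md[OF dD13 r5(1)] unfolding D13_def mix_md[OF r1(1) r3(1)] by argo
    have nn: "m i l \<ge> 0" if "i \<in> {1..6}" for i unfolding m_def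
      using md_nonneg[OF om _ l] rho[OF that] by blast
    have xb: "0 \<le> X k l \<and> X k l \<le> 1" for k unfolding X_def using xi_bounds[OF om l] by blast
    show ?thesis unfolding Z_def
      by (rule pw) (use nn xb f1 f2 f3 in auto)
  qed
  have intg: "integrable M (\<lambda>l. m i l * X k l)" for i k
    unfolding m_def X_def by (rule mdx_int[OF om])
  have intv: "(\<integral>l. m i l * X k l \<partial>M) = avg (rho i) (P k Pos)" for i k
    unfolding m_def X_def mdx_integral[OF om] opstat_fun ..
  have intm: "integrable M (m i)" for i unfolding m_def by (rule md_int[OF om])
  have intm1: "(\<integral>l. m i l \<partial>M) = 1" if "i \<in> {1..6}" for i
    unfolding m_def using md_integral[OF om] rho[OF that] by blast
  have Zexp: "Z = (\<lambda>l. (1/2) * ((m 1 l * X T1 l - m 1 l * X T2 l) - (m 2 l * X T1 l - m 2 l * X T2 l)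
     + (m 3 l * X T2 l - m 3 l * X T3 l) - (m 4 l * X T2 l - m 4 l * X T3 l)
     + (m 5 l * X T3 l - m 5 l * X T1 l) - (m 6 l * X T3 l - m 6 l * X T1 l)))"
    unfolding Z_def by (rule ext) (simp add: algebra_simps divide_simps)
  have intZ: "integrable M Z" unfolding Zexp using intg by simp
  have valZ: "(\<integral>l. Z l \<partial>M) = 2 * e0"
    unfolding Zexp using intg by (simp add: intv r1 r1' r2 r3 r4 r5 r6)
  have "(\<integral>l. Z l \<partial>M) \<le> (\<integral>l. m 1 l + m 2 l \<partial>M)"
    by (rule integral_mono[OF intZ]) (use intm pwZ in auto)
  also have "\<dots> = 2" using intm intm1[of 1] intm1[of 2] by simp
  finally show False using valZ e0gt by simp
qed
end
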